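(* Let $G_1,G_2$ be $q$-cut-dense graphs. Then $G_1\cup G_2$ is $\frac{q|V(G_1)\cap V(G_2)|}{4|V(G_1)\cup V(G_2)|}$-cut-dense.
   Context: A graph $G$ is $q$-cut-dense if for every partition $V(G)=A\cup B$ into disjoint sets, $e_G(A,B)\ge q|A||B|$, where $e_G(A,B)$ counts edges with one endpoint in $A$ and one in $B$. $G_1\cup G_2$ is the graph with vertex set $V(G_1)\cup V(G_2)$ and edge set $E(G_1)\cup E(G_2)$. *)

theory Defs
  imports Main Complex_Main
begin

definition graph :: "'a set \<Rightarrow> 'a set set \<Rightarrow> bool" where
  "graph V E \<longleftrightarrow> finite V \<and> (\<forall>e\<in>E. e \<subseteq> V \<and> card e = 2)"

definition e_betw :: "'a set set \<Rightarrow> 'a set \<Rightarrow> 'a set \<Rightarrow> nat" where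
  "e_betw E A B = card {e\<in>E. \<exists>a\<in>A. \<exists>b\<in>B. e = {a, b}}"

definition cut_dense :: "real \<Rightarrow> 'a set \<Rightarrow> 'a set set \<Rightarrow> bool" where
  "cut_dense q V E \<longleftrightarrow>
     (\<forall>A B. A \<union> B = V \<longrightarrow> A \<inter> B = {} \<longrightarrow>
        real (e_betw E A B) \<ge> q * real (card A) * real (card B))"

end

theory Submission
  imports Defs
begin

lemma e_betw_mono:
  assumes "finite E'" "E \<subseteq> E'" "A \<subseteq> A'" "B \<subseteq> B'"
  shows "e_betw E A B \<le> e_betw E' A' B'"
  unfolding e_betw_def
  by (rule card_mono) (use assms in auto, blast)

lemma e_betw_sym: "e_betw E A B = e_betw E B A"
  unfolding e_betw_def by (rule arg_cong[where f=card]) (auto simp: insert_commute)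

lemma graph_finE: "graph V E \<Longrightarrow> finite E"
  unfolding graph_def by (meson PowI finite_Pow_iff finite_subset subsetI)

lemma core:
  fixes V1 V2 :: "'a set" and E1 E2 :: "'a set set" and q :: real
  assumes f1: "finite V1" and f2: "finite V2" and fE: "finite (E1 \<union> E2)"
    and c1: "cut_dense q V1 E1" and c2: "cut_dense q V2 E2" and q: "q \<ge> 0"
    and AB: "A \<union> B = V1 \<union> V2" "A \<inter> B = {}"
    and half: "real (card (V1 \<inter> V2)) \<le> 2 * real (card (A \<inter> (V1 \<inter> V2)))"
  shows "q * real (card (V1 \<inter> V2)) / (4 * real (card (V1 \<union> V2))) * real (card A) * real (card B)
         \<le> real (e_betw (E1 \<union> E2) A B)"
proof -
  define k where "k = real (card (V1 \<inter> V2))"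
  define n where "n = real (card (V1 \<union> V2))"
  define a where "a = real (card A)"
  define b where "b = real (card B)"
  have finU: "finite (V1 \<union> V2)" using f1 f2 by simp
  have "card A \<le> card (V1 \<union> V2)" using AB finU by (metis Un_upper1 card_mono)
  hence an: "a \<le> n" unfolding a_def n_def by simp
  have a0: "a \<ge> 0" "b \<ge> 0" "k \<ge> 0" unfolding a_def b_def k_def by auto
  have k1: "k \<le> 2 * real (card (A \<inter> V1))"
    using half card_mono[of "A \<inter> V1" "A \<inter> (V1 \<inter> V2)"] f1 unfolding k_def by force
  have k2: "k \<le> 2 * real (card (A \<inter> V2))"
    using half card_mono[of "A \<inter> V2" "A \<inter> (V1 \<inter> V2)"] f2 unfolding k_def by force
  have "B = (B \<inter> V1) \<union> (B \<inter> V2)" using AB by blast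
  hence "card B \<le> card (B \<inter> V1) + card (B \<inter> V2)" by (metis card_Un_le)
  hence bsum: "b \<le> real (card (B \<inter> V1)) + real (card (B \<inter> V2))" unfolding b_def by simp
  have key: "q * k * b / 4 \<le> real (e_betw (E1 \<union> E2) A B)"
  proof (cases "b \<le> 2 * real (card (B \<inter> V1))")
    case True
    have "q * k * b / 4 \<le> q * real (card (A \<inter> V1)) * real (card (B \<inter> V1))"
    proof -
      have "k * b \<le> (2 * real (card (A \<inter> V1))) * (2 * real (card (B \<inter> V1)))"
        using mult_mono[OF k1 True] a0 by simp
      hence "q * (k * b) \<le> q * ((2 * real (card (A \<inter> V1))) * (2 * real (card (B \<inter> V1))))"
        using q by (rule mult_left_mono)
      thus ?thesis by (simp add: mult_ac)
    qed
    also have "\<dots> \<le> real (e_betw E1 (A \<inter> V1) (B \<inter> V1))"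
    proof -
      have h1: "(A \<inter> V1) \<union> (B \<inter> V1) = V1" "(A \<inter> V1) \<inter> (B \<inter> V1) = {}" using AB by blast+
      show ?thesis using c1[unfolded cut_dense_def, rule_format, OF h1] by simp
    qed
    also have "\<dots> \<le> real (e_betw (E1 \<union> E2) A B)"
      using e_betw_mono[OF fE, of E1 "A \<inter> V1" A "B \<inter> V1" B] by auto
    finally show ?thesis .
  next
    case False
    hence True: "b \<le> 2 * real (card (B \<inter> V2))" using bsum by linarith
    have "q * k * b / 4 \<le> q * real (card (A \<inter> V2)) * real (card (B \<inter> V2))"
    proof -
      have "k * b \<le> (2 * real (card (A \<inter> V2))) * (2 * real (card (B \<inter> V2)))"
        using mult_mono[OF k2 True] a0 by simp
      hence "q * (k * b) \<le> q * ((2 * real (card (A \<inter> V2))) * (2 * real (card (B \<inter> V2))))"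
        using q by (rule mult_left_mono)
      thus ?thesis by (simp add: mult_ac)
    qed
    also have "\<dots> \<le> real (e_betw E2 (A \<inter> V2) (B \<inter> V2))"
    proof -
      have h1: "(A \<inter> V2) \<union> (B \<inter> V2) = V2" "(A \<inter> V2) \<inter> (B \<inter> V2) = {}" using AB by blast+
      show ?thesis using c2[unfolded cut_dense_def, rule_format, OF h1] by simp
    qed
    also have "\<dots> \<le> real (e_betw (E1 \<union> E2) A B)"
      using e_betw_mono[OF fE, of E2 "A \<inter> V2" A "B \<inter> V2" B] by auto
    finally show ?thesis .
  qed
  have "q * k / (4 * n) * a * b \<le> q * k * b / 4"
  proof (cases "n = 0")
    case True thus ?thesis using a0 q by simp
  next
    case False
    hence np: "n > 0" using an a0 by linarith
    have "q * k / (4 * n) * a * b = (q * k * b / 4) * (a / n)" by (simp add: field_simps)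
    also have "\<dots> \<le> (q * k * b / 4) * 1"
      using an np a0 q by (intro mult_left_mono) (auto simp: divide_le_eq_1)
    finally show ?thesis by simp
  qed
  with key show ?thesis unfolding k_def n_def a_def b_def by linarith
qed

theorem lemma3p8:
  fixes V1 V2 :: "'a set" and E1 E2 :: "'a set set" and q :: real
  assumes "graph V1 E1" and "graph V2 E2"
    and "cut_dense q V1 E1" and "cut_dense q V2 E2"
  shows "cut_dense (q * real (card (V1 \<inter> V2)) / (4 * real (card (V1 \<union> V2))))
           (V1 \<union> V2) (E1 \<union> E2)"
  unfolding cut_dense_def
proof (intro allI impI)
  fix A B assume AB: "A \<union> B = V1 \<union> V2" "A \<inter> B = {}"
  have f1: "finite V1" and f2: "finite V2" using assms(1,2) unfolding graph_def by auto
  have fE: "finite (E1 \<union> E2)" using graph_finE assms(1,2) by blast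
  show "q * real (card (V1 \<inter> V2)) / (4 * real (card (V1 \<union> V2))) * real (card A) * real (card B)
         \<le> real (e_betw (E1 \<union> E2) A B)"
  proof (cases "q \<ge> 0")
    case False
    have "q * real (card (V1 \<inter> V2)) \<le> 0" using False by (simp add: mult_nonpos_nonneg)
    hence "q * real (card (V1 \<inter> V2)) / (4 * real (card (V1 \<union> V2))) \<le> 0"
      by (rule divide_nonpos_nonneg) simp
    hence "q * real (card (V1 \<inter> V2)) / (4 * real (card (V1 \<union> V2))) * real (card A) * real (card B) \<le> 0"
      by (intro mult_nonpos_nonneg) simp_all
    thus ?thesis by linarith
  next
    case q: True
    let ?I = "V1 \<inter> V2"
    have fI: "finite ?I" using f1 by simp
    have "?I = (A \<inter> ?I) \<union> (B \<inter> ?I)" using AB by blast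
    hence Ieq: "?I = (A \<inter> ?I) \<union> (B \<inter> ?I)" .
    have "card ?I = card (A \<inter> ?I) + card (B \<inter> ?I)"
    proof -
      have "(A \<inter> ?I) \<inter> (B \<inter> ?I) = {}" using AB by blast
      moreover have "finite (A \<inter> ?I)" "finite (B \<inter> ?I)" using fI by auto
      ultimately show ?thesis using card_Un_disjoint Ieq by metis
    qed
    hence "real (card ?I) \<le> 2 * real (card (A \<inter> ?I)) \<or> real (card ?I) \<le> 2 * real (card (B \<inter> ?I))"
      by linarith
    thus ?thesis
    proof
      assume h: "real (card ?I) \<le> 2 * real (card (A \<inter> ?I))"
      show ?thesis by (rule core[OF f1 f2 fE assms(3,4) q AB h])
    next
      assume h: "real (card ?I) \<le> 2 * real (card (B \<inter> ?I))"
      have AB': "B \<union> A = V1 \<union> V2" "B \<inter> A = {}" using AB by auto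
      have "q * real (card ?I) / (4 * real (card (V1 \<union> V2))) * real (card B) * real (card A)
         \<le> real (e_betw (E1 \<union> E2) B A)"
        by (rule core[OF f1 f2 fE assms(3,4) q AB' h])
      thus ?thesis by (simp add: e_betw_sym[of _ A B] mult_ac)
    qed
  qed
qed

end
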